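(* Let $I=\{i_1<i_2<\cdots<i_{2r}\}\subseteq[n]$ be a subset of even size. Then the word \[ \prod_{m=1}^{r} s_n\,(s_{n-2}s_{n-3}\cdots s_{i_{2m-1}})\,(s_{n-1}s_{n-2}\cdots s_{i_{2m}}) \] (where a run $s_a s_{a-1}\cdots s_b$ is empty if $a<b$) is a reduced expression for the unique element $w\in W$ of minimal length among all $u\in W$ with $\{i\in[n]: u(i)>n\}=I$; this $w$ is the minimal length representative of its right coset $W_{[n-1]}w$. Moreover, this word is a subword of $s_{i'_1}s_{i'_2}\cdots s_{i'_N}$, where the $m$-th factor is taken from the $m$-th group of blocks of that word.
   Context: The Weyl group $W$ of $\mathrm{SO}(2n)$ is the group of permutations $\sigma$ of $[2n]$ such that for each $i\in[n]$, $\sigma(n+i)\equiv n+\sigma(i)\pmod{2n}$ (with values in $[2n]$), and $|\{i\in[n]:\sigma(i)>n\}|$ is even; composition is $(\sigma\tau)(j)=\sigma(\tau(j))$. It is generated by $s_i=(i,i+1)(n+i,n+i+1)$ for $1\le i\le n-1$ and $s_n=(n,2n-1)(n-1,2n)$; length is with respect to these generators. $W_{[n-1]}=\langle s_1,\dots,s_{n-1}\rangle$. For $N=\binom n2$, $(i'_1,\dots,i'_N)$ is the sequence obtained by concatenating, for $m=1,\dots,\lfloor n/2\rfloor$ (the $m$-th group), the blocks "$n$", "$n-2,n-3,\dots,2m-1$", "$n-1,n-2,\dots,2m$" (empty runs if start $<$ end); $s_{i'_1}\cdots s_{i'_N}$ is a reduced word for the minimal coset representative of the longest element. *)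

theory Defs
  imports "HOL-Combinatorics.Combinatorics" "HOL-Library.Sublist"
begin

text \<open>Weyl group of SO(2n): permutations of {1..2n} (identity outside) with
  sigma(n+i) = n + sigma(i) mod 2n (values in [2n]) and an even number of i in [n]
  with sigma(i) > n.\<close>
definition inW :: "nat \<Rightarrow> (nat \<Rightarrow> nat) \<Rightarrow> bool" where
  "inW n \<sigma> \<longleftrightarrow> \<sigma> permutes {1..2*n}
     \<and> (\<forall>i\<in>{1..n}. \<sigma> (n+i) = (if \<sigma> i \<le> n then \<sigma> i + n else \<sigma> i - n))
     \<and> even (card {i\<in>{1..n}. \<sigma> i > n})"

definition negset :: "nat \<Rightarrow> (nat \<Rightarrow> nat) \<Rightarrow> nat set" where
  "negset n u = {i\<in>{1..n}. u i > n}"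

definition gen :: "nat \<Rightarrow> nat \<Rightarrow> (nat \<Rightarrow> nat)" where
  "gen n i = (if i = n then transpose n (2*n-1) \<circ> transpose (n-1) (2*n)
              else transpose i (i+1) \<circ> transpose (n+i) (n+i+1))"

definition wordprod :: "nat \<Rightarrow> nat list \<Rightarrow> (nat \<Rightarrow> nat)" where
  "wordprod n xs = foldr (\<lambda>i acc. gen n i \<circ> acc) xs id"

definition is_word :: "nat \<Rightarrow> nat list \<Rightarrow> bool" where
  "is_word n xs \<longleftrightarrow> set xs \<subseteq> {1..n}"

definition wlen :: "nat \<Rightarrow> (nat \<Rightarrow> nat) \<Rightarrow> nat" where
  "wlen n w = (LEAST k. \<exists>xs. is_word n xs \<and> length xs = k \<and> wordprod n xs = w)"

definition reduced_expr :: "nat \<Rightarrow> nat list \<Rightarrow> (nat \<Rightarrow> nat) \<Rightarrow> bool" where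
  "reduced_expr n xs w \<longleftrightarrow> is_word n xs \<and> wordprod n xs = w \<and> length xs = wlen n w"

definition Wpar :: "nat \<Rightarrow> (nat \<Rightarrow> nat) set" where
  "Wpar n = {wordprod n xs | xs. set xs \<subseteq> {1..n-1}}"

definition rcoset :: "nat \<Rightarrow> (nat \<Rightarrow> nat) \<Rightarrow> (nat \<Rightarrow> nat) set" where
  "rcoset n w = {u \<circ> w | u. u \<in> Wpar n}"

definition run :: "nat \<Rightarrow> nat \<Rightarrow> nat list" where
  "run a b = rev [b..<Suc a]"

definition ielem :: "nat set \<Rightarrow> nat \<Rightarrow> nat" where
  "ielem I j = sorted_list_of_set I ! (j - 1)"

definition factorI :: "nat \<Rightarrow> nat set \<Rightarrow> nat \<Rightarrow> nat list" where
  "factorI n I m = [n] @ run (n-2) (ielem I (2*m-1)) @ run (n-1) (ielem I (2*m))"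

definition wordI :: "nat \<Rightarrow> nat set \<Rightarrow> nat list" where
  "wordI n I = concat (map (factorI n I) [1..<Suc (card I div 2)])"

definition groupL :: "nat \<Rightarrow> nat \<Rightarrow> nat list" where
  "groupL n m = [n] @ run (n-2) (2*m-1) @ run (n-1) (2*m)"

definition wordLong :: "nat \<Rightarrow> nat list" where
  "wordLong n = concat (map (groupL n) [1..<Suc (n div 2)])"

end

theory Submission
  imports Defs
begin


definition av :: "nat \<Rightarrow> nat \<Rightarrow> nat" where "av n x = (if x \<le> n then x else x - n)"
definition sw :: "nat \<Rightarrow> nat \<Rightarrow> nat" where
  "sw t a = (if a = t then t+1 else if a = t+1 then t else a)"
definition tt :: "nat \<Rightarrow> nat \<Rightarrow> nat" where "tt n i = (if i = n then n-1 else i)"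

lemma gen_lt: "2 \<le> n \<Longrightarrow> 1 \<le> i \<Longrightarrow> i < n \<Longrightarrow> gen n i y = (if y = i then i+1 else if y = i+1 then i else
   if y = n+i then n+i+1 else if y = n+i+1 then n+i else y)"
  unfolding gen_def transpose_def by auto

lemma gen_n: "2 \<le> n \<Longrightarrow> gen n n y = (if y = n then 2*n-1 else if y = 2*n-1 then n else
   if y = n-1 then 2*n else if y = 2*n then n-1 else y)"
  unfolding gen_def transpose_def by auto

lemma gen_cases: "2 \<le> n \<Longrightarrow> i \<in> {1..n} \<Longrightarrow> (i < n \<Longrightarrow> P (gen n i)) \<Longrightarrow> (i = n \<Longrightarrow> P (gen n n)) \<Longrightarrow> P (gen n i)"
  by force

lemma gen_range:
  assumes "2 \<le> n" "i \<in> {1..n}" "y \<in> {1..2*n}"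
  shows "gen n i y \<in> {1..2*n}"
proof (cases "i < n")
  case True thus ?thesis using assms by (auto simp add: gen_lt split: if_splits)
next
  case False hence "i = n" using assms by auto
  thus ?thesis using assms by (auto simp add: gen_n split: if_splits)
qed

lemma gen_out:
  assumes "2 \<le> n" "i \<in> {1..n}" "y \<notin> {1..2*n}"
  shows "gen n i y = y"
proof (cases "i < n")
  case True thus ?thesis using assms by (auto simp add: gen_lt split: if_splits)
next
  case False hence "i = n" using assms by auto
  thus ?thesis using assms by (auto simp add: gen_n split: if_splits)
qed

lemma gen_gen:
  assumes "2 \<le> n" "i \<in> {1..n}"
  shows "gen n i (gen n i y) = y"
proof (cases "i < n")
  case True thus ?thesis using assms by (auto simp add: gen_lt split: if_splits)
next
  case False hence "i = n" using assms by auto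
  thus ?thesis using assms by (auto simp add: gen_n split: if_splits)
qed

lemma gen_av:
  assumes "2 \<le> n" "i \<in> {1..n}" "y \<in> {1..2*n}"
  shows "av n (gen n i y) = sw (tt n i) (av n y)"
proof (cases "i < n")
  case True thus ?thesis using assms by (auto simp add: gen_lt av_def sw_def tt_def split: if_splits)
next
  case False hence "i = n" using assms by auto
  thus ?thesis using assms by (auto simp add: gen_n av_def sw_def tt_def split: if_splits)
qed

lemma gen_ng:
  assumes "2 \<le> n" "i \<in> {1..n}" "y \<in> {1..2*n}"
  shows "(n < gen n i y) = (if i = n \<and> av n y \<in> {n-1,n} then \<not> n < y else n < y)"
proof (cases "i < n")
  case True thus ?thesis using assms by (auto simp add: gen_lt av_def split: if_splits)
next
  case False hence "i = n" using assms by auto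
  thus ?thesis using assms by (auto simp add: gen_n av_def split: if_splits)
qed


definition sh :: "nat \<Rightarrow> nat \<Rightarrow> nat" where "sh n y = (if y \<le> n then y + n else y - n)"

definition SP :: "nat \<Rightarrow> (nat \<Rightarrow> nat) \<Rightarrow> bool" where
  "SP n u \<longleftrightarrow> u permutes {1..2*n} \<and> (\<forall>i\<in>{1..n}. u (n+i) = sh n (u i))"

lemma av_sh: "y \<in> {1..2*n} \<Longrightarrow> av n (sh n y) = av n y"
  by (auto simp: av_def sh_def)
lemma ng_sh: "y \<in> {1..2*n} \<Longrightarrow> (n < sh n y) = (\<not> n < y)"
  by (auto simp: sh_def)
lemma sh_range: "y \<in> {1..2*n} \<Longrightarrow> sh n y \<in> {1..2*n}"
  by (auto simp: sh_def)
lemma av_ng_eq: "y \<in> {1..2*n} \<Longrightarrow> z \<in> {1..2*n} \<Longrightarrow> av n y = av n z \<Longrightarrow> (n < y) = (n < z) \<Longrightarrow> y = z"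
  by (auto simp: av_def split: if_splits)

lemma gen_sh:
  assumes "2 \<le> n" "i \<in> {1..n}" "y \<in> {1..2*n}"
  shows "gen n i (sh n y) = sh n (gen n i y)"
proof (rule av_ng_eq)
  have r: "sh n y \<in> {1..2*n}" "gen n i y \<in> {1..2*n}" using assms sh_range gen_range by auto
  show "gen n i (sh n y) \<in> {1..2*n}" using r assms gen_range by auto
  show "sh n (gen n i y) \<in> {1..2*n}" using r sh_range by auto
  show "av n (gen n i (sh n y)) = av n (sh n (gen n i y))"
    using assms r by (simp add: gen_av av_sh)
  show "(n < gen n i (sh n y)) = (n < sh n (gen n i y))"
    using assms r by (simp add: gen_ng av_sh ng_sh)
qed

lemma gen_permutes:
  assumes "2 \<le> n" "i \<in> {1..n}"
  shows "gen n i permutes {1..2*n}"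
  unfolding gen_def using assms
  by (auto intro!: permutes_compose permutes_swap_id)

lemma SP_gen:
  assumes "2 \<le> n" "i \<in> {1..n}" "SP n u"
  shows "SP n (gen n i \<circ> u)"
proof -
  have p: "u permutes {1..2*n}" using assms SP_def by auto
  have "\<forall>j\<in>{1..n}. (gen n i \<circ> u) (n+j) = sh n ((gen n i \<circ> u) j)"
  proof
    fix j assume j: "j \<in> {1..n}"
    have "u j \<in> {1..2*n}" using p j permutes_in_image[of u "{1..2*n}" j] by auto
    thus "(gen n i \<circ> u) (n+j) = sh n ((gen n i \<circ> u) j)"
      using assms j gen_sh unfolding SP_def by auto
  qed
  thus ?thesis using p gen_permutes[OF assms(1,2)] unfolding SP_def
    by (auto intro: permutes_compose)
qed

lemma wordprod_Nil[simp]: "wordprod n [] = id"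
  by (simp add: wordprod_def)
lemma wordprod_Cons[simp]: "wordprod n (i # xs) = gen n i \<circ> wordprod n xs"
  by (simp add: wordprod_def)
lemma wordprod_append: "wordprod n (xs @ ys) = wordprod n xs \<circ> wordprod n ys"
  by (induction xs) auto

lemma SP_id: "SP n id"
  unfolding SP_def using permutes_id[of "{1..2*n}"] by (simp add: sh_def)

lemma SP_wordprod:
  assumes "2 \<le> n" "set xs \<subseteq> {1..n}"
  shows "SP n (wordprod n xs)"
  using assms(2)
proof (induction xs)
  case Nil thus ?case by (simp only: wordprod_Nil SP_id)
next
  case (Cons a xs)
  hence "a \<in> {1..n}" "SP n (wordprod n xs)" by auto
  from SP_gen[OF assms(1) this] show ?case by (simp only: wordprod_Cons)
qed

lemma SP_range: "SP n u \<Longrightarrow> j \<in> {1..2*n} \<Longrightarrow> u j \<in> {1..2*n}"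
  unfolding SP_def using permutes_in_image[of u "{1..2*n}" j] by blast

lemma av_range: "y \<in> {1..2*n} \<Longrightarrow> av n y \<in> {1..n}"
  by (auto simp: av_def)

lemma av_inj:
  assumes "SP n u" "j \<in> {1..n}" "k \<in> {1..n}" "av n (u j) = av n (u k)"
  shows "j = k"
proof -
  have inj: "inj u" using assms(1) SP_def permutes_inj by blast
  have uj: "u j \<in> {1..2*n}" "u k \<in> {1..2*n}" using assms SP_range by auto
  have sj: "u (n+j) = sh n (u j)" "u (n+k) = sh n (u k)" using assms unfolding SP_def by auto
  show ?thesis
  proof (cases "u j \<le> n")
    case True
    show ?thesis
    proof (cases "u k \<le> n")
      case True
      hence "u j = u k" using \<open>u j \<le> n\<close> assms(4) by (simp add: av_def)
      thus ?thesis using inj by (simp add: inj_eq)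
    next
      case False
      hence "u (n+j) = u k" using \<open>u j \<le> n\<close> assms(4) sj by (simp add: av_def sh_def)
      hence "n + j = k" using inj by (simp add: inj_eq)
      thus ?thesis using assms by auto
    qed
  next
    case False
    show ?thesis
    proof (cases "u k \<le> n")
      case True
      hence "u (n+k) = u j" using \<open>\<not> u j \<le> n\<close> assms(4) sj uj by (simp add: av_def sh_def)
      hence "n + k = j" using inj by (simp add: inj_eq)
      thus ?thesis using assms by auto
    next
      case False
      hence "u j = u k" using \<open>\<not> u j \<le> n\<close> assms(4) uj by (simp add: av_def)
      thus ?thesis using inj by (simp add: inj_eq)
    qed
  qed
qed

lemma av_bij:
  assumes "SP n u"
  shows "bij_betw (\<lambda>j. av n (u j)) {1..n} {1..n}"
proof -
  have i: "inj_on (\<lambda>j. av n (u j)) {1..n}" using av_inj[OF assms] by (auto simp: inj_on_def)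
  have s: "(\<lambda>j. av n (u j)) ` {1..n} \<subseteq> {1..n}"
    using SP_range[OF assms] av_range by auto
  show ?thesis using endo_inj_surj[OF _ s i] i by (auto simp: bij_betw_def)
qed



definition C :: "nat \<Rightarrow> nat \<Rightarrow> bool \<Rightarrow> nat" where
  "C a b s = (if a < b then (if s then 2 else 0) else 1)"
definition cc :: "nat \<Rightarrow> (nat \<Rightarrow> nat) \<Rightarrow> nat \<Rightarrow> nat \<Rightarrow> nat" where
  "cc n u j k = C (av n (u j)) (av n (u k)) (n < u j)"
definition PP :: "nat \<Rightarrow> (nat \<times> nat) set" where
  "PP n = Sigma {1..n} (\<lambda>j. {j<..n})"
definition ff :: "nat \<Rightarrow> (nat \<Rightarrow> nat) \<Rightarrow> nat" where
  "ff n u = (\<Sum>p\<in>PP n. cc n u (fst p) (snd p))"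

lemma finite_PP[simp]: "finite (PP n)" by (simp add: PP_def)
lemma PP_mem: "p \<in> PP n \<longleftrightarrow> 1 \<le> fst p \<and> fst p < snd p \<and> snd p \<le> n"
  by (cases p) (auto simp: PP_def)

lemma cc_gen:
  assumes "2 \<le> n" "i \<in> {1..n}" "SP n u" "j \<in> {1..n}" "k \<in> {1..n}"
  shows "cc n (gen n i \<circ> u) j k = C (sw (tt n i) (av n (u j))) (sw (tt n i) (av n (u k)))
            (if i = n \<and> av n (u j) \<in> {n-1,n} then \<not> n < u j else n < u j)"
proof -
  have "u j \<in> {1..2*n}" "u k \<in> {1..2*n}" using assms SP_range by auto
  thus ?thesis using assms unfolding cc_def by (simp add: gen_av gen_ng)
qed

lemma C_same:
  assumes "a \<noteq> b" "a \<in> {1..n}" "b \<in> {1..n}" "fl \<Longrightarrow> t + 1 = n"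
    "\<not> ((a = t \<and> b = t+1) \<or> (a = t+1 \<and> b = t))"
  shows "C (sw t a) (sw t b) (if fl \<and> a \<in> {t,t+1} then \<not> s else s) = C a b s"
proof (cases "a \<in> {t,t+1}")
  case True
  hence bn: "b \<notin> {t,t+1}" using assms(1,5) by auto
  hence swb: "sw t b = b" by (simp add: sw_def)
  have swa: "sw t a \<in> {t,t+1}" using True by (auto simp: sw_def)
  show ?thesis
  proof (cases fl)
    case True
    hence "b < t" using assms(3,4) bn by auto
    hence "\<not> a < b" "\<not> sw t a < b" using \<open>a \<in> {t,t+1}\<close> swa by auto
    thus ?thesis using swb by (simp add: C_def)
  next
    case False
    have "(sw t a < b) = (a < b)" using \<open>a \<in> {t,t+1}\<close> bn by (auto simp: sw_def)
    thus ?thesis using swb False by (simp add: C_def)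
  qed
next
  case False
  hence swa: "sw t a = a" by (simp add: sw_def)
  have "(a < sw t b) = (a < b)" using False by (auto simp: sw_def)
  thus ?thesis using swa False by (simp add: C_def)
qed

lemma C_le:
  assumes "(a = t \<and> b = t+1) \<or> (a = t+1 \<and> b = t)"
  shows "C (sw t a) (sw t b) s' \<le> C a b s + 1"
  using assms unfolding C_def sw_def by auto

lemma tt_props: "2 \<le> n \<Longrightarrow> i \<in> {1..n} \<Longrightarrow> tt n i \<in> {1..n-1} \<and> (i = n \<longrightarrow> tt n i + 1 = n)"
  by (auto simp: tt_def)

definition spec :: "nat \<Rightarrow> (nat \<Rightarrow> nat) \<Rightarrow> nat \<Rightarrow> nat \<times> nat \<Rightarrow> bool" where
  "spec n u t p \<longleftrightarrow> (av n (u (fst p)) = t \<and> av n (u (snd p)) = t+1) \<or>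
                    (av n (u (fst p)) = t+1 \<and> av n (u (snd p)) = t)"

lemma cc_gen_same:
  assumes "2 \<le> n" "i \<in> {1..n}" "SP n u" "p \<in> PP n" "\<not> spec n u (tt n i) p"
  shows "cc n (gen n i \<circ> u) (fst p) (snd p) = cc n u (fst p) (snd p)"
proof -
  obtain j k where p: "p = (j,k)" by (cases p)
  have jk: "j \<in> {1..n}" "k \<in> {1..n}" "j \<noteq> k" using assms(4) p PP_mem by auto
  have ne: "av n (u j) \<noteq> av n (u k)" using av_inj[OF assms(3) jk(1,2)] jk(3) by auto
  have r: "av n (u j) \<in> {1..n}" "av n (u k) \<in> {1..n}" using jk SP_range[OF assms(3)] av_range by auto
  have t: "i = n \<Longrightarrow> tt n i + 1 = n" using tt_props[OF assms(1,2)] by auto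
  have e: "i = n \<Longrightarrow> {n-1,n} = {tt n i, tt n i + 1}" using t by auto
  have "C (sw (tt n i) (av n (u j))) (sw (tt n i) (av n (u k)))
            (if i = n \<and> av n (u j) \<in> {tt n i, tt n i + 1} then \<not> n < u j else n < u j)
        = C (av n (u j)) (av n (u k)) (n < u j)"
    by (rule C_same[OF ne r t]) (use assms(5) p in \<open>auto simp: spec_def\<close>)
  moreover have "(i = n \<and> av n (u j) \<in> {n-1,n}) = (i = n \<and> av n (u j) \<in> {tt n i, tt n i + 1})"
    using e by auto
  ultimately show ?thesis using cc_gen[OF assms(1-3) jk(1,2)] p by (simp add: cc_def)
qed

lemma cc_gen_le:
  assumes "2 \<le> n" "i \<in> {1..n}" "SP n u" "p \<in> PP n" "spec n u (tt n i) p"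
  shows "cc n (gen n i \<circ> u) (fst p) (snd p) \<le> cc n u (fst p) (snd p) + 1"
proof -
  obtain j k where p: "p = (j,k)" by (cases p)
  have jk: "j \<in> {1..n}" "k \<in> {1..n}" "j \<noteq> k" using assms(4) p PP_mem by auto
  have ne: "av n (u j) \<noteq> av n (u k)" using av_inj[OF assms(3) jk(1,2)] jk(3) by auto
  have sp: "(av n (u j) = tt n i \<and> av n (u k) = tt n i+1) \<or> (av n (u j) = tt n i+1 \<and> av n (u k) = tt n i)"
    using assms(5) p by (simp add: spec_def)
  show ?thesis using cc_gen[OF assms(1-3) jk(1,2)] C_le[OF sp] p by (simp add: cc_def)
qed

lemma spec_card:
  assumes "SP n u"
  shows "card {p \<in> PP n. spec n u t p} \<le> 1"
proof -
  have "\<forall>p\<in>{p \<in> PP n. spec n u t p}. \<forall>q\<in>{p \<in> PP n. spec n u t p}. p = q"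
  proof (intro ballI)
    fix p q assume pq: "p \<in> {p \<in> PP n. spec n u t p}" "q \<in> {p \<in> PP n. spec n u t p}"
    obtain j k where p: "p = (j,k)" by (cases p)
    obtain j' k' where q: "q = (j',k')" by (cases q)
    have r: "j \<in> {1..n}" "k \<in> {1..n}" "j' \<in> {1..n}" "k' \<in> {1..n}" "j < k" "j' < k'"
      using pq p q PP_mem by auto
    have e: "\<And>x y. x \<in> {1..n} \<Longrightarrow> y \<in> {1..n} \<Longrightarrow> av n (u x) = av n (u y) \<Longrightarrow> x = y"
      using av_inj[OF assms] by blast
    have sp: "(av n (u j) = t \<and> av n (u k) = t+1) \<or> (av n (u j) = t+1 \<and> av n (u k) = t)"
      using pq(1) p by (simp add: spec_def)
    have sq: "(av n (u j') = t \<and> av n (u k') = t+1) \<or> (av n (u j') = t+1 \<and> av n (u k') = t)"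
      using pq(2) q by (simp add: spec_def)
    have "j = j' \<and> k = k'"
    proof -
      { assume a: "av n (u j) = t" "av n (u k) = t+1"
        { assume b: "av n (u j') = t" "av n (u k') = t+1"
          have ?thesis using e[OF r(1,3)] e[OF r(2,4)] a b by simp }
        moreover
        { assume b: "av n (u j') = t+1" "av n (u k') = t"
          have "j = k'" "k = j'" using e[OF r(1,4)] e[OF r(2,3)] a b by simp_all
          hence ?thesis using r by simp }
        ultimately have ?thesis using sq by blast }
      moreover
      { assume a: "av n (u j) = t+1" "av n (u k) = t"
        { assume b: "av n (u j') = t+1" "av n (u k') = t"
          have ?thesis using e[OF r(1,3)] e[OF r(2,4)] a b by simp }
        moreover
        { assume b: "av n (u j') = t" "av n (u k') = t+1"
          have "j = k'" "k = j'" using e[OF r(1,4)] e[OF r(2,3)] a b by simp_all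
          hence ?thesis using r by simp }
        ultimately have ?thesis using sq by blast }
      ultimately show ?thesis using sp by blast
    qed
    thus "p = q" using p q by simp
  qed
  thus ?thesis by (simp add: card_le_Suc0_iff_eq)
qed

lemma ff_gen_le:
  assumes "2 \<le> n" "i \<in> {1..n}" "SP n u"
  shows "ff n (gen n i \<circ> u) \<le> ff n u + 1"
proof -
  let ?S = "{p \<in> PP n. spec n u (tt n i) p}"
  have "ff n (gen n i \<circ> u) \<le> (\<Sum>p\<in>PP n. cc n u (fst p) (snd p) + (if spec n u (tt n i) p then 1 else 0))"
    unfolding ff_def
  proof (rule sum_mono)
    fix p assume p: "p \<in> PP n"
    show "cc n (gen n i \<circ> u) (fst p) (snd p) \<le> cc n u (fst p) (snd p) + (if spec n u (tt n i) p then 1 else 0)"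
      using cc_gen_le[OF assms p] cc_gen_same[OF assms p] by (cases "spec n u (tt n i) p") simp_all
  qed
  also have "\<dots> = ff n u + card ?S"
    by (simp add: ff_def sum.distrib sum.If_cases Int_def)
  also have "\<dots> \<le> ff n u + 1" using spec_card[OF assms(3)] by simp
  finally show ?thesis .
qed


lemma ff_id: "ff n id = 0"
proof -
  have "\<forall>p\<in>PP n. cc n id (fst p) (snd p) = 0"
    by (auto simp: PP_mem cc_def C_def av_def)
  thus ?thesis unfolding ff_def by (rule sum.neutral)
qed

lemma ff_word:
  assumes "2 \<le> n" "set xs \<subseteq> {1..n}"
  shows "ff n (wordprod n xs) \<le> length xs"
  using assms(2)
proof (induction xs)
  case Nil thus ?case using ff_id[of n] by (simp add: id_def)
next
  case (Cons a xs)
  hence a: "a \<in> {1..n}" and s: "SP n (wordprod n xs)" and ih: "ff n (wordprod n xs) \<le> length xs"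
    using SP_wordprod[OF assms(1)] by auto
  have "ff n (wordprod n (a # xs)) = ff n (gen n a \<circ> wordprod n xs)" by simp
  also have "\<dots> \<le> ff n (wordprod n xs) + 1" by (rule ff_gen_le[OF assms(1) a s])
  moreover have "length (a # xs) = length xs + 1" by simp
  ultimately show ?case using ih by linarith
qed

lemma wlen_ge:
  assumes "2 \<le> n" "is_word n xs" "wordprod n xs = u"
  shows "ff n u \<le> wlen n u"
proof -
  let ?P = "\<lambda>k. \<exists>xs. is_word n xs \<and> length xs = k \<and> wordprod n xs = u"
  have "?P (length xs)" using assms by auto
  hence "?P (Least ?P)" by (rule LeastI)
  then obtain ys where ys: "is_word n ys" "length ys = Least ?P" "wordprod n ys = u" by blast
  have "ff n u \<le> length ys" using ff_word[OF assms(1)] ys is_word_def by blast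
  thus ?thesis using ys(2) unfolding wlen_def by simp
qed

lemma wlen_le:
  assumes "is_word n xs" "wordprod n xs = u"
  shows "wlen n u \<le> length xs"
  unfolding wlen_def by (rule Least_le) (use assms in auto)

lemma spec_unique:
  assumes "SP n u" "p \<in> PP n" "q \<in> PP n" "spec n u t p" "spec n u t q"
  shows "p = q"
proof -
  have f: "finite {p \<in> PP n. spec n u t p}" by simp
  have "\<forall>a\<in>{p \<in> PP n. spec n u t p}. \<forall>b\<in>{p \<in> PP n. spec n u t p}. a = b"
    using spec_card[OF assms(1), of t] card_le_Suc0_iff_eq[OF f] by simp
  thus ?thesis using assms(2-5) by blast
qed

lemma nodesc_pair:
  assumes "2 \<le> n" "i \<in> {1..n}" "SP n u" "j \<in> {1..n}" "k \<in> {1..n}"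
    "av n (u j) = tt n i" "av n (u k) = tt n i + 1" "\<not> ff n (gen n i \<circ> u) < ff n u"
  shows "if j < k then cc n u j k \<le> cc n (gen n i \<circ> u) j k else cc n u k j \<le> cc n (gen n i \<circ> u) k j"
proof -
  define p0 where "p0 = (if j < k then (j,k) else (k,j))"
  have jk: "j \<noteq> k" using assms(6,7) by auto
  have p0: "p0 \<in> PP n" using assms(4,5) jk by (auto simp: p0_def PP_mem)
  have s0: "spec n u (tt n i) p0" using assms(6,7) by (auto simp: p0_def spec_def)
  have "\<not> cc n (gen n i \<circ> u) (fst p0) (snd p0) < cc n u (fst p0) (snd p0)"
  proof
    assume lt: "cc n (gen n i \<circ> u) (fst p0) (snd p0) < cc n u (fst p0) (snd p0)"
    have "ff n (gen n i \<circ> u) < ff n u"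
      unfolding ff_def
    proof (rule sum_strict_mono_ex1)
      show "\<forall>p\<in>PP n. cc n (gen n i \<circ> u) (fst p) (snd p) \<le> cc n u (fst p) (snd p)"
      proof
        fix p assume p: "p \<in> PP n"
        show "cc n (gen n i \<circ> u) (fst p) (snd p) \<le> cc n u (fst p) (snd p)"
        proof (cases "spec n u (tt n i) p")
          case True
          hence "p = p0" using spec_unique[OF assms(3) p p0 _ s0] by simp
          thus ?thesis using lt by simp
        next
          case False
          thus ?thesis using cc_gen_same[OF assms(1-3) p] by simp
        qed
      qed
      show "\<exists>p\<in>PP n. cc n (gen n i \<circ> u) (fst p) (snd p) < cc n u (fst p) (snd p)"
        using p0 lt by blast
    qed simp
    thus False using assms(8) by simp
  qed
  thus ?thesis by (auto simp: p0_def)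
qed


lemma inW_SP: "inW n u \<longleftrightarrow> SP n u \<and> even (card (negset n u))"
  unfolding inW_def SP_def negset_def sh_def by auto

definition pos :: "nat \<Rightarrow> (nat \<Rightarrow> nat) \<Rightarrow> nat \<Rightarrow> nat" where
  "pos n u t = inv_into {1..n} (\<lambda>j. av n (u j)) t"

lemma pos_props:
  assumes "SP n u" "t \<in> {1..n}"
  shows "pos n u t \<in> {1..n}" "av n (u (pos n u t)) = t"
proof -
  have b: "bij_betw (\<lambda>j. av n (u j)) {1..n} {1..n}" by (rule av_bij[OF assms(1)])
  show "av n (u (pos n u t)) = t" unfolding pos_def
    using bij_betw_inv_into_right[OF b assms(2)] by simp
  show "pos n u t \<in> {1..n}" unfolding pos_def
    using b assms(2) by (metis bij_betw_def inv_into_into)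
qed

lemma pos_inv:
  assumes "SP n u" "j \<in> {1..n}"
  shows "pos n u (av n (u j)) = j"
proof -
  have b: "bij_betw (\<lambda>j. av n (u j)) {1..n} {1..n}" by (rule av_bij[OF assms(1)])
  show ?thesis unfolding pos_def using inv_into_f_f[of "\<lambda>j. av n (u j)" "{1..n}" j] b assms(2)
    by (simp add: bij_betw_def)
qed

lemma nodesc_lt:
  assumes "2 \<le> n" "SP n u" "1 \<le> t" "t < n" "\<not> ff n (gen n t \<circ> u) < ff n u"
  shows "pos n u t < pos n u (t+1) \<Longrightarrow> \<not> n < u (pos n u t)"
    and "pos n u (t+1) < pos n u t \<Longrightarrow> n < u (pos n u (t+1))"
proof -
  have i: "t \<in> {1..n}" using assms by auto
  have tt: "tt n t = t" using assms by (simp add: tt_def)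
  have t1: "t \<in> {1..n}" "t+1 \<in> {1..n}" using assms by auto
  note P1 = pos_props[OF assms(2) t1(1)] and P2 = pos_props[OF assms(2) t1(2)]
  have nd: "if pos n u t < pos n u (t+1) then cc n u (pos n u t) (pos n u (t+1)) \<le> cc n (gen n t \<circ> u) (pos n u t) (pos n u (t+1))
     else cc n u (pos n u (t+1)) (pos n u t) \<le> cc n (gen n t \<circ> u) (pos n u (t+1)) (pos n u t)"
    by (rule nodesc_pair[OF assms(1) i assms(2) P1(1) P2(1)]) (use P1 P2 tt assms(5) in auto)
  have ne: "t \<noteq> n" using assms by simp
  show "pos n u t < pos n u (t+1) \<Longrightarrow> \<not> n < u (pos n u t)"
  proof -
    assume lt: "pos n u t < pos n u (t+1)"
    have "cc n u (pos n u t) (pos n u (t+1)) \<le> cc n (gen n t \<circ> u) (pos n u t) (pos n u (t+1))"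
      using nd lt by simp
    moreover have "cc n (gen n t \<circ> u) (pos n u t) (pos n u (t+1)) = 1"
      using cc_gen[OF assms(1) i assms(2) P1(1) P2(1)] P1(2) P2(2) tt ne by (simp add: C_def sw_def)
    moreover have "cc n u (pos n u t) (pos n u (t+1)) = (if n < u (pos n u t) then 2 else 0)"
      using P1(2) P2(2) by (simp add: cc_def C_def)
    ultimately show ?thesis by (auto split: if_splits)
  qed
  show "pos n u (t+1) < pos n u t \<Longrightarrow> n < u (pos n u (t+1))"
  proof -
    assume lt: "pos n u (t+1) < pos n u t"
    have "cc n u (pos n u (t+1)) (pos n u t) \<le> cc n (gen n t \<circ> u) (pos n u (t+1)) (pos n u t)"
      using nd lt by simp
    moreover have "cc n (gen n t \<circ> u) (pos n u (t+1)) (pos n u t) = (if n < u (pos n u (t+1)) then 2 else 0)"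
      using cc_gen[OF assms(1) i assms(2) P2(1) P1(1)] P1(2) P2(2) tt ne by (simp add: C_def sw_def)
    moreover have "cc n u (pos n u (t+1)) (pos n u t) = 1"
      using P1(2) P2(2) by (simp add: cc_def C_def)
    ultimately show ?thesis by (auto split: if_splits)
  qed
qed

lemma nodesc_n:
  assumes "2 \<le> n" "SP n u" "\<not> ff n (gen n n \<circ> u) < ff n u"
  shows "pos n u (n-1) < pos n u n \<Longrightarrow> \<not> n < u (pos n u (n-1))"
    and "pos n u n < pos n u (n-1) \<Longrightarrow> \<not> n < u (pos n u n)"
proof -
  have i: "n \<in> {1..n}" using assms by auto
  have tt: "tt n n = n-1" by (simp add: tt_def)
  have t1: "n-1 \<in> {1..n}" "n \<in> {1..n}" "n - 1 + 1 = n" using assms by auto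
  note P1 = pos_props[OF assms(2) t1(1)] and P2 = pos_props[OF assms(2) t1(2)]
  have nd: "if pos n u (n-1) < pos n u n then cc n u (pos n u (n-1)) (pos n u n) \<le> cc n (gen n n \<circ> u) (pos n u (n-1)) (pos n u n)
     else cc n u (pos n u n) (pos n u (n-1)) \<le> cc n (gen n n \<circ> u) (pos n u n) (pos n u (n-1))"
    by (rule nodesc_pair[OF assms(1) i assms(2) P1(1) P2(1)]) (use P1 P2 tt t1(3) assms(3) in auto)
  have nl: "\<not> n < n - Suc 0" by simp
  have sw1: "sw (n-1) (n-1) = n" "sw (n-1) n = n-1" using t1(3) by (auto simp: sw_def)
  show "pos n u (n-1) < pos n u n \<Longrightarrow> \<not> n < u (pos n u (n-1))"
  proof -
    assume lt: "pos n u (n-1) < pos n u n"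
    have "cc n u (pos n u (n-1)) (pos n u n) \<le> cc n (gen n n \<circ> u) (pos n u (n-1)) (pos n u n)"
      using nd lt by simp
    moreover have "cc n (gen n n \<circ> u) (pos n u (n-1)) (pos n u n) = 1"
      using cc_gen[OF assms(1) i assms(2) P1(1) P2(1)] P1(2) P2(2) tt sw1 nl by (simp add: C_def)
    moreover have "cc n u (pos n u (n-1)) (pos n u n) = (if n < u (pos n u (n-1)) then 2 else 0)"
      using P1(2) P2(2) t1 by (simp add: cc_def C_def)
    ultimately show ?thesis by (auto split: if_splits)
  qed
  show "pos n u n < pos n u (n-1) \<Longrightarrow> \<not> n < u (pos n u n)"
  proof -
    assume lt: "pos n u n < pos n u (n-1)"
    have "cc n u (pos n u n) (pos n u (n-1)) \<le> cc n (gen n n \<circ> u) (pos n u n) (pos n u (n-1))"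
      using nd lt by simp
    moreover have "cc n (gen n n \<circ> u) (pos n u n) (pos n u (n-1)) = (if n < u (pos n u n) then 0 else 2)"
      using cc_gen[OF assms(1) i assms(2) P2(1) P1(1)] P1(2) P2(2) tt sw1 t1 by (simp add: C_def)
    moreover have "cc n u (pos n u n) (pos n u (n-1)) = 1"
      using P1(2) P2(2) t1 by (simp add: cc_def C_def)
    ultimately show ?thesis by (auto split: if_splits)
  qed
qed


lemma descent:
  assumes "2 \<le> n" "inW n u" "u \<noteq> id"
  shows "\<exists>i\<in>{1..n}. ff n (gen n i \<circ> u) < ff n u"
proof (rule ccontr)
  assume "\<not> ?thesis"
  hence nd: "\<And>i. i\<in>{1..n} \<Longrightarrow> \<not> ff n (gen n i \<circ> u) < ff n u" by blast
  have sp: "SP n u" and ev: "even (card (negset n u))" using assms(2) inW_SP by auto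
  define P where "P = pos n u"
  define S where "S t = (n < u (P t))" for t
  have Pr: "\<And>t. t\<in>{1..n} \<Longrightarrow> P t \<in> {1..n} \<and> av n (u (P t)) = t"
    unfolding P_def using pos_props[OF sp] by blast
  have Pi: "\<And>j. j \<in> {1..n} \<Longrightarrow> P (av n (u j)) = j"
    unfolding P_def using pos_inv[OF sp] by blast
  have A: "\<And>t. 1\<le>t \<Longrightarrow> t<n \<Longrightarrow> P t < P (t+1) \<Longrightarrow> \<not> S t"
    unfolding P_def S_def using nodesc_lt(1)[OF assms(1) sp] nd by simp
  have B: "\<And>t. 1\<le>t \<Longrightarrow> t<n \<Longrightarrow> P (t+1) < P t \<Longrightarrow> S (t+1)"
    unfolding P_def S_def using nodesc_lt(2)[OF assms(1) sp] nd by simp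
  have n1: "n \<in> {1..n}" using assms by auto
  have Cc: "P (n-1) < P n \<Longrightarrow> \<not> S (n-1)"
    unfolding P_def S_def using nodesc_n(1)[OF assms(1) sp nd[OF n1]] by simp
  have D: "P n < P (n-1) \<Longrightarrow> \<not> S n"
    unfolding P_def S_def using nodesc_n(2)[OF assms(1) sp nd[OF n1]] by simp
  have Pne: "\<And>t. 1\<le>t \<Longrightarrow> t<n \<Longrightarrow> P t \<noteq> P (t+1)"
  proof
    fix t assume t: "1\<le>t" "t<n" "P t = P (t+1)"
    have "av n (u (P t)) = t" "av n (u (P (t+1))) = t+1" using Pr t(1,2) by auto
    thus False using t(3) by simp
  qed
  have up: "\<And>t. 1\<le>t \<Longrightarrow> t<n \<Longrightarrow> S t \<Longrightarrow> S (t+1) \<and> P (t+1) < P t"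
  proof -
    fix t assume t: "1\<le>t" "t<n" "S t"
    hence "P (t+1) < P t" using A[OF t(1,2)] Pne[OF t(1,2)] by fastforce
    thus "S (t+1) \<and> P (t+1) < P t" using B[OF t(1,2)] by simp
  qed
  have nS1: "\<not> S (n-1)"
  proof
    assume s: "S (n-1)"
    have "1 \<le> n-1" "n-1 < n" using assms by auto
    from up[OF this s] have "S n" "P n < P (n-1)" using assms by auto
    thus False using D by simp
  qed
  have low: "\<And>t. 1\<le>t \<Longrightarrow> t \<le> n-1 \<Longrightarrow> \<not> S t"
  proof
    fix t assume t: "1\<le>t" "t \<le> n-1" "S t"
    have "S t \<longrightarrow> S (n-1)"
      using t(2)
    proof (induction t rule: inc_induct)
      case base thus ?case by simp
    next
      case (step x)
      have x: "1 \<le> x" "x < n" using step.hyps t(1) by auto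
      show ?case
      proof
        assume "S x"
        hence "S (Suc x)" using up[OF x] by simp
        thus "S (n-1)" using step.IH by simp
      qed
    qed
    thus False using t(3) nS1 by simp
  qed
  have negs: "negset n u \<subseteq> {P n}"
  proof
    fix j assume j: "j \<in> negset n u"
    hence j1: "j \<in> {1..n}" "n < u j" by (auto simp: negset_def)
    let ?t = "av n (u j)"
    have t1: "?t \<in> {1..n}" using av_range SP_range[OF sp] j1(1) by auto
    have pj: "P ?t = j" using Pi[OF j1(1)] .
    have "S ?t" using pj j1(2) by (simp add: S_def)
    hence "\<not> ?t \<le> n - 1" using low t1 by auto
    hence "?t = n" using t1 by auto
    thus "j \<in> {P n}" using pj by simp
  qed
  have "card (negset n u) \<le> 1" using card_mono[OF _ negs] by simp
  hence "card (negset n u) = 0 \<or> card (negset n u) = 1" by auto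
  hence "card (negset n u) = 0" using ev by auto
  hence ne: "negset n u = {}" by (simp add: negset_def)
  have nSn: "\<not> S n"
  proof
    assume "S n"
    hence "P n \<in> negset n u" using Pr[OF n1] by (simp add: S_def negset_def)
    thus False using ne by simp
  qed
  have allS: "\<And>t. t\<in>{1..n} \<Longrightarrow> \<not> S t"
  proof -
    fix t assume t: "t \<in> {1..n}"
    show "\<not> S t"
    proof (cases "t = n")
      case True thus ?thesis using nSn by simp
    next
      case False hence "t \<le> n-1" "1 \<le> t" using t by auto
      thus ?thesis using low by blast
    qed
  qed
  have inc: "\<And>t. 1 \<le> t \<Longrightarrow> t < n \<Longrightarrow> P t < P (t+1)"
  proof -
    fix t assume t: "1 \<le> t" "t < n"
    have "\<not> S (t+1)" using allS t by auto
    thus "P t < P (t+1)" using B[OF t] Pne[OF t] by fastforce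
  qed
  have ge: "\<And>t. 1\<le>t \<Longrightarrow> t\<le>n \<Longrightarrow> t \<le> P t"
  proof -
    fix t show "1\<le>t \<Longrightarrow> t\<le>n \<Longrightarrow> t \<le> P t"
    proof (induction t)
      case 0 thus ?case by simp
    next
      case (Suc t)
      show ?case
      proof (cases "t = 0")
        case True thus ?thesis using Pr[of 1] Suc.prems by auto
      next
        case False
        hence "t \<le> P t" "P t < P (t+1)" using Suc inc[of t] by auto
        thus ?thesis by simp
      qed
    qed
  qed
  have le: "\<And>t. 1\<le>t \<Longrightarrow> t\<le>n \<Longrightarrow> P t \<le> t"
  proof -
    fix t assume t: "1\<le>t" "t\<le>n"
    show "P t \<le> t" using t(2)
    proof (induction t rule: inc_induct)
      case base thus ?case using Pr[OF n1] by simp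
    next
      case (step x)
      have "1 \<le> x" "x < n" using step.hyps t(1) by auto
      hence "P x < P (Suc x)" using inc by simp
      thus ?case using step.IH by simp
    qed
  qed
  have uj: "\<And>j. j\<in>{1..n} \<Longrightarrow> u j = j"
  proof -
    fix j assume j: "j \<in> {1..n}"
    let ?t = "av n (u j)"
    have t1: "?t \<in> {1..n}" using av_range SP_range[OF sp] j by auto
    have pj: "P ?t = j" using Pi[OF j] .
    have "P ?t = ?t" using ge[of ?t] le[of ?t] t1 by auto
    hence jt: "j = ?t" using pj by simp
    have "\<not> n < u j" using allS[OF t1] pj by (simp add: S_def)
    thus "u j = j" using jt by (simp add: av_def)
  qed
  have "u = id"
  proof
    fix x
    show "u x = id x"
    proof (cases "x \<in> {1..n}")
      case True thus ?thesis using uj by simp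
    next
      case False
      show ?thesis
      proof (cases "x \<in> {1..2*n}")
        case True
        hence x: "x - n \<in> {1..n}" "x = n + (x - n)" using False by auto
        have "u x = sh n (u (x - n))" using sp x unfolding SP_def by metis
        also have "\<dots> = x" using uj[OF x(1)] x by (simp add: sh_def)
        finally show ?thesis by simp
      next
        case False
        thus ?thesis using sp permutes_not_in unfolding SP_def by fastforce
      qed
    qed
  qed
  thus False using assms(3) by simp
qed


lemma negset_gen:
  assumes "2 \<le> n" "i \<in> {1..n}" "SP n u"
  shows "negset n (gen n i \<circ> u) = {j\<in>{1..n}. if i = n \<and> av n (u j) \<in> {n-1,n} then \<not> n < u j else n < u j}"
  unfolding negset_def using gen_ng[OF assms(1,2)] SP_range[OF assms(3)] by auto

lemma inW_gen:
  assumes "2 \<le> n" "i \<in> {1..n}" "inW n u"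
  shows "inW n (gen n i \<circ> u)"
proof -
  have sp: "SP n u" and ev: "even (card (negset n u))" using assms(3) inW_SP by auto
  have sp2: "SP n (gen n i \<circ> u)" by (rule SP_gen[OF assms(1,2) sp])
  have "even (card (negset n (gen n i \<circ> u)))"
  proof (cases "i = n")
    case False
    hence "negset n (gen n i \<circ> u) = negset n u" using negset_gen[OF assms(1,2) sp]
      by (simp add: negset_def)
    thus ?thesis using ev by simp
  next
    case True
    let ?N = "negset n u"
    let ?X = "{j\<in>{1..n}. av n (u j) \<in> {n-1,n}}"
    have N': "negset n (gen n i \<circ> u) = (?N - ?X) \<union> (?X - ?N)"
      using negset_gen[OF assms(1,2) sp] True by (auto simp: negset_def)
    have t1: "n-1 \<in> {1..n}" "n \<in> {1..n}" using assms by auto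
    note P1 = pos_props[OF sp t1(1)] and P2 = pos_props[OF sp t1(2)]
    have X: "?X = {pos n u (n-1), pos n u n}"
    proof
      show "?X \<subseteq> {pos n u (n-1), pos n u n}"
      proof
        fix j assume "j \<in> ?X"
        hence j: "j \<in> {1..n}" "av n (u j) \<in> {n-1,n}" by auto
        thus "j \<in> {pos n u (n-1), pos n u n}" using pos_inv[OF sp j(1)] by auto
      qed
      show "{pos n u (n-1), pos n u n} \<subseteq> ?X" using P1 P2 by auto
    qed
    have "pos n u (n-1) \<noteq> pos n u n" using P1(2) P2(2) assms(1) by force
    hence cX: "card ?X = 2" using X by simp
    have fN: "finite ?N" "finite ?X" by (auto simp: negset_def)
    have c1: "card ((?N - ?X) \<union> (?X - ?N)) = card (?N - ?X) + card (?X - ?N)"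
      by (rule card_Un_disjoint) (use fN in auto)
    have c2: "card ?N = card (?N \<inter> ?X) + card (?N - ?X)" by (rule card_Int_Diff[OF fN(1)])
    have c3: "card ?X = card (?X \<inter> ?N) + card (?X - ?N)" by (rule card_Int_Diff[OF fN(2)])
    have "?X \<inter> ?N = ?N \<inter> ?X" by blast
    hence "card (negset n (gen n i \<circ> u)) + 2 * card (?N \<inter> ?X) = card ?N + 2"
      using N' c1 c2 c3 cX by simp
    moreover have "\<And>a b c. a + 2*b = c + 2 \<Longrightarrow> even c \<Longrightarrow> even (a::nat)" by presburger
    ultimately show ?thesis using ev by blast
  qed
  thus ?thesis using sp2 inW_SP by simp
qed

lemma generation:
  assumes "2 \<le> n" "inW n u"
  shows "\<exists>xs. is_word n xs \<and> wordprod n xs = u"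
  using assms(2)
proof (induction "ff n u" arbitrary: u rule: less_induct)
  case less
  show ?case
  proof (cases "u = id")
    case True
    hence "is_word n [] \<and> wordprod n [] = u" by (simp add: is_word_def)
    thus ?thesis by blast
  next
    case False
    obtain i where i: "i \<in> {1..n}" "ff n (gen n i \<circ> u) < ff n u"
      using descent[OF assms(1) less.prems False] by blast
    have "inW n (gen n i \<circ> u)" by (rule inW_gen[OF assms(1) i(1) less.prems])
    then obtain xs where xs: "is_word n xs" "wordprod n xs = gen n i \<circ> u"
      using less.hyps[OF i(2)] by blast
    have "wordprod n (i # xs) = gen n i \<circ> (gen n i \<circ> u)" using xs(2) by simp
    also have "\<dots> = u" using gen_gen[OF assms(1) i(1)] by (simp add: fun_eq_iff)
    finally have "is_word n (i # xs) \<and> wordprod n (i # xs) = u" using xs(1) i(1) by (simp add: is_word_def)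
    thus ?thesis by blast
  qed
qed


definition Dc :: "nat \<Rightarrow> (nat \<Rightarrow> nat) \<Rightarrow> bool" where
  "Dc n u \<longleftrightarrow> (\<forall>j k. 1 \<le> j \<longrightarrow> j < k \<longrightarrow> k \<le> n \<longrightarrow>
      (if n < u j then av n (u k) < av n (u j) else av n (u j) < av n (u k)))"

lemma sum_g0:
  "(\<Sum>p\<in>PP n. (if n < u (fst p) then 1 else 0::nat)) = (\<Sum>j\<in>negset n u. n - j)"
proof -
  have "(\<Sum>p\<in>PP n. (if n < u (fst p) then 1 else 0::nat))
      = (\<Sum>j\<in>{1..n}. \<Sum>k\<in>{j<..n}. (if n < u j then 1 else 0::nat))"
    unfolding PP_def by (subst sum.Sigma) (auto simp: case_prod_beta)
  also have "\<dots> = (\<Sum>j\<in>{1..n}. if n < u j then n - j else 0)"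
    by (rule sum.cong) auto
  also have "\<dots> = (\<Sum>j\<in>negset n u. n - j)"
    unfolding negset_def by (rule sum.inter_filter[symmetric]) simp
  finally show ?thesis .
qed


lemma ff_lower:
  assumes "SP n u"
  shows "(\<Sum>j\<in>negset n u. n - j) \<le> ff n u"
    and "ff n u = (\<Sum>j\<in>negset n u. n - j) \<Longrightarrow> Dc n u"
proof -
  have pw: "\<forall>p\<in>PP n. (if n < u (fst p) then 1 else 0::nat) \<le> cc n u (fst p) (snd p)"
    by (auto simp: cc_def C_def)
  show "(\<Sum>j\<in>negset n u. n - j) \<le> ff n u"
    unfolding sum_g0[symmetric] ff_def using pw by (intro sum_mono) auto
  assume eq: "ff n u = (\<Sum>j\<in>negset n u. n - j)"
  have all: "\<forall>p\<in>PP n. cc n u (fst p) (snd p) = (if n < u (fst p) then 1 else 0)"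
  proof (rule ccontr)
    assume "\<not> ?thesis"
    then obtain p where p: "p \<in> PP n" "cc n u (fst p) (snd p) \<noteq> (if n < u (fst p) then 1 else 0)" by blast
    have "(\<Sum>p\<in>PP n. (if n < u (fst p) then 1 else 0::nat)) < ff n u"
      unfolding ff_def
    proof (rule sum_strict_mono_ex1)
      have le: "(if n < u (fst p) then 1 else 0) \<le> cc n u (fst p) (snd p)" using pw p(1) by blast
      hence "(if n < u (fst p) then 1 else 0) < cc n u (fst p) (snd p)" using p(2) by linarith
      thus "\<exists>a\<in>PP n. (if n < u (fst a) then 1 else 0) < cc n u (fst a) (snd a)"
        using p(1) by blast
    qed (use pw in auto)
    thus False using eq sum_g0 by simp
  qed
  show "Dc n u" unfolding Dc_def
  proof (intro allI impI)
    fix j k assume jk: "1 \<le> j" "j < k" "k \<le> n"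
    hence p: "(j,k) \<in> PP n" by (simp add: PP_mem)
    have ne: "av n (u j) \<noteq> av n (u k)" using av_inj[OF assms, of j k] jk by auto
    have "cc n u j k = (if n < u j then 1 else 0)" using all p by fastforce
    hence c: "C (av n (u j)) (av n (u k)) (n < u j) = (if n < u j then 1 else 0)" by (simp add: cc_def)
    show "if n < u j then av n (u k) < av n (u j) else av n (u j) < av n (u k)"
      by (cases "n < u j"; cases "av n (u j) < av n (u k)") (use c ne in \<open>simp_all add: C_def\<close>)
  qed
qed


lemma card_below:
  assumes "SP n u" "j \<in> {1..n}"
  shows "card {k\<in>{1..n}. av n (u k) < av n (u j)} = av n (u j) - 1"
proof -
  let ?f = "\<lambda>k. av n (u k)"
  let ?A = "{k\<in>{1..n}. av n (u k) < av n (u j)}"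
  have b: "bij_betw ?f {1..n} {1..n}" by (rule av_bij[OF assms(1)])
  have sub: "?A \<subseteq> {1..n}" by blast
  have inj: "inj_on ?f ?A" by (rule inj_on_subset[OF bij_betw_imp_inj_on[OF b] sub])
  have fj: "?f j \<in> {1..n}" using bij_betw_apply[OF b assms(2)] .
  have im: "?f ` {1..n} = {1..n}" by (rule bij_betw_imp_surj_on[OF b])
  have "?f ` ?A = {1..<?f j}"
  proof
    show "?f ` ?A \<subseteq> {1..<?f j}"
    proof
      fix t assume "t \<in> ?f ` ?A"
      then obtain k where k: "k \<in> {1..n}" "?f k < ?f j" "t = ?f k" by blast
      have "?f k \<in> {1..n}" using bij_betw_apply[OF b k(1)] .
      thus "t \<in> {1..<?f j}" using k by auto
    qed
    show "{1..<?f j} \<subseteq> ?f ` ?A"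
    proof
      fix t assume t: "t \<in> {1..<?f j}"
      hence "t \<in> {1..n}" using fj by auto
      hence "t \<in> ?f ` {1..n}" using im by simp
      then obtain k where "k \<in> {1..n}" "t = ?f k" by blast
      thus "t \<in> ?f ` ?A" using t by auto
    qed
  qed
  hence "card ?A = card {1..<?f j}"
    using card_image[OF inj] by simp
  thus ?thesis by simp
qed

lemma Dc_unique:
  assumes "SP n u" "SP n v" "negset n u = negset n v" "Dc n u" "Dc n v"
  shows "u = v"
proof -
  have key: "\<And>w j. SP n w \<Longrightarrow> Dc n w \<Longrightarrow> j \<in> {1..n} \<Longrightarrow>
     {k\<in>{1..n}. av n (w k) < av n (w j)} = {k\<in>{1..n}. (k < j \<and> k \<notin> negset n w) \<or> (j < k \<and> j \<in> negset n w)}"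
  proof -
    fix w j assume w: "SP n w" "Dc n w" "j \<in> {1..n}"
    show "{k\<in>{1..n}. av n (w k) < av n (w j)} = {k\<in>{1..n}. (k < j \<and> k \<notin> negset n w) \<or> (j < k \<and> j \<in> negset n w)}"
    proof (rule Collect_cong, rule conj_cong[OF refl])
      fix k assume k: "k \<in> {1..n}"
      consider "k < j" | "k = j" | "j < k" by arith
      thus "av n (w k) < av n (w j) \<longleftrightarrow> (k < j \<and> k \<notin> negset n w) \<or> (j < k \<and> j \<in> negset n w)"
      proof cases
        case 1
        have d: "if n < w k then av n (w j) < av n (w k) else av n (w k) < av n (w j)"
          using w(2) k w(3) 1 unfolding Dc_def by auto
        have nk: "k \<in> negset n w \<longleftrightarrow> n < w k" using k by (simp add: negset_def)
        show ?thesis using 1 by (cases "n < w k") (use d nk in auto)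
      next
        case 2 thus ?thesis by simp
      next
        case 3
        have d: "if n < w j then av n (w k) < av n (w j) else av n (w j) < av n (w k)"
          using w(2) k w(3) 3 unfolding Dc_def by auto
        have nj: "j \<in> negset n w \<longleftrightarrow> n < w j" using w(3) by (simp add: negset_def)
        show ?thesis using 3 by (cases "n < w j") (use d nj in auto)
      qed
    qed
  qed
  have uv: "\<And>j. j \<in> {1..n} \<Longrightarrow> u j = v j"
  proof -
    fix j assume j: "j \<in> {1..n}"
    have "av n (u j) - 1 = av n (v j) - 1"
      using card_below[OF assms(1) j] card_below[OF assms(2) j] key[OF assms(1) assms(4) j]
        key[OF assms(2) assms(5) j] assms(3) by simp
    moreover have "av n (u j) \<in> {1..n}" "av n (v j) \<in> {1..n}"
      using j SP_range assms(1,2) av_range by auto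
    ultimately have a: "av n (u j) = av n (v j)" by auto
    have "(n < u j) = (n < v j)" using assms(3) j by (auto simp: negset_def)
    moreover have "u j \<in> {1..2*n}" "v j \<in> {1..2*n}" using SP_range assms(1,2) j by auto
    ultimately show "u j = v j" using av_ng_eq a by blast
  qed
  show "u = v"
  proof
    fix x
    show "u x = v x"
    proof (cases "x \<in> {1..n}")
      case True thus ?thesis using uv by simp
    next
      case False
      show ?thesis
      proof (cases "x \<in> {1..2*n}")
        case True
        hence x: "x - n \<in> {1..n}" "x = n + (x - n)" using False by auto
        have "u x = sh n (u (x - n))" using assms(1) x unfolding SP_def by metis
        moreover have "v x = sh n (v (x - n))" using assms(2) x unfolding SP_def by metis
        ultimately show ?thesis using uv[OF x(1)] by simp
      next
        case False
        thus ?thesis using assms(1,2) permutes_not_in unfolding SP_def by metis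
      qed
    qed
  qed
qed



fun wl :: "nat \<Rightarrow> nat list \<Rightarrow> nat list" where
  "wl n (p # q # rest) = [n] @ run (n-2) p @ run (n-1) q @ wl n rest"
| "wl n _ = []"

definition rv :: "nat \<Rightarrow> nat \<Rightarrow> nat \<Rightarrow> nat" where
  "rv a b y = (if y = b then Suc a else if b < y \<and> y \<le> Suc a then y - 1 else y)"

lemma run_Suc: "b \<le> Suc a \<Longrightarrow> run (Suc a) b = Suc a # run a b"
  by (simp add: run_def)
lemma run_empty: "run a (Suc a) = []"
  by (simp add: run_def)
lemma set_run: "set (run a b) = {b..a}"
  by (auto simp: run_def)
lemma length_run: "length (run a b) = Suc a - b"
  by (simp add: run_def Suc_diff_le)

lemma wordprod_run:
  assumes "2 \<le> n" "1 \<le> b" "b \<le> Suc a" "Suc a \<le> n"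
  shows "\<forall>y. 1 \<le> y \<and> y \<le> n \<longrightarrow> wordprod n (run a b) y = rv a b y \<and> wordprod n (run a b) (n+y) = n + rv a b y"
  using assms(3,4)
proof (induction a)
  case 0
  hence "b = Suc 0" using assms(2) by simp
  thus ?case by (auto simp: run_empty rv_def)
next
  case (Suc a)
  show ?case
  proof (cases "b = Suc (Suc a)")
    case True
    thus ?thesis by (auto simp: run_empty rv_def)
  next
    case False
    hence b: "b \<le> Suc a" using Suc.prems by simp
    have ih: "\<forall>y. 1 \<le> y \<and> y \<le> n \<longrightarrow> wordprod n (run a b) y = rv a b y \<and> wordprod n (run a b) (n+y) = n + rv a b y"
      using Suc.IH b Suc.prems by simp
    have g: "\<And>z. gen n (Suc a) z = (if z = Suc a then Suc (Suc a) else if z = Suc (Suc a) then Suc a else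
       if z = n + Suc a then n + Suc (Suc a) else if z = n + Suc (Suc a) then n + Suc a else z)"
      using gen_lt[OF assms(1), of "Suc a"] Suc.prems by simp
    show ?thesis
    proof (intro allI impI)
      fix y assume y: "1 \<le> y \<and> y \<le> n"
      have e1: "wordprod n (run (Suc a) b) y = gen n (Suc a) (rv a b y)" using ih y b by (simp add: run_Suc)
      have e2: "wordprod n (run (Suc a) b) (n+y) = gen n (Suc a) (n + rv a b y)" using ih y b by (simp add: run_Suc)
      have "gen n (Suc a) (rv a b y) = rv (Suc a) b y"
        unfolding g rv_def using b y Suc.prems assms(2) by auto
      moreover have "gen n (Suc a) (n + rv a b y) = n + rv (Suc a) b y"
        unfolding g rv_def using b y Suc.prems assms(2) by auto
      ultimately show "wordprod n (run (Suc a) b) y = rv (Suc a) b y \<and> wordprod n (run (Suc a) b) (n+y) = n + rv (Suc a) b y"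
        using e1 e2 by simp
    qed
  qed
qed


lemma F_vals:
  assumes "2 \<le> n" "1 \<le> p" "p < q" "q \<le> n"
  defines "W \<equiv> wordprod n ([n] @ run (n-2) p @ run (n-1) q)"
  shows "\<And>y. y \<in> {1..n} \<Longrightarrow> y \<noteq> p \<Longrightarrow> y \<noteq> q \<Longrightarrow> W y = (if y < p then y else if y < q then y - 1 else y - 2)"
    and "W p = 2*n" and "W q = 2*n - 1"
    and "\<And>a. q < a \<Longrightarrow> a \<le> n \<Longrightarrow> W (n + a) = n + a - 2"
proof -
  have R2: "\<forall>y. 1 \<le> y \<and> y \<le> n \<longrightarrow> wordprod n (run (n-1) q) y = rv (n-1) q y \<and> wordprod n (run (n-1) q) (n+y) = n + rv (n-1) q y"
    by (rule wordprod_run) (use assms in auto)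
  have R1: "\<forall>y. 1 \<le> y \<and> y \<le> n \<longrightarrow> wordprod n (run (n-2) p) y = rv (n-2) p y \<and> wordprod n (run (n-2) p) (n+y) = n + rv (n-2) p y"
    by (rule wordprod_run) (use assms in auto)
  have r2a: "\<And>y. 1 \<le> y \<Longrightarrow> y \<le> n \<Longrightarrow> wordprod n (run (n-1) q) y = rv (n-1) q y" using R2 by blast
  have r2b: "\<And>y. 1 \<le> y \<Longrightarrow> y \<le> n \<Longrightarrow> wordprod n (run (n-1) q) (n+y) = n + rv (n-1) q y" using R2 by blast
  have r1a: "\<And>y. 1 \<le> y \<Longrightarrow> y \<le> n \<Longrightarrow> wordprod n (run (n-2) p) y = rv (n-2) p y" using R1 by blast
  have r1b: "\<And>y. 1 \<le> y \<Longrightarrow> y \<le> n \<Longrightarrow> wordprod n (run (n-2) p) (n+y) = n + rv (n-2) p y" using R1 by blast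
  have Wd: "\<And>z. W z = gen n n (wordprod n (run (n-2) p) (wordprod n (run (n-1) q) z))"
    unfolding W_def by (simp add: wordprod_append)
  note g = gen_n[OF assms(1)]
  show "\<And>y. y \<in> {1..n} \<Longrightarrow> y \<noteq> p \<Longrightarrow> y \<noteq> q \<Longrightarrow> W y = (if y < p then y else if y < q then y - 1 else y - 2)"
  proof -
    fix y assume y: "y \<in> {1..n}" "y \<noteq> p" "y \<noteq> q"
    define z where "z = (if y < q then y else y - 1)"
    have a: "wordprod n (run (n-1) q) y = z" using r2a[of y] y assms unfolding rv_def z_def by auto
    have z1: "1 \<le> z" "z \<le> n" using y assms unfolding z_def by auto
    define z2 where "z2 = (if y < p then y else if y < q then y - 1 else y - 2)"
    have b: "wordprod n (run (n-2) p) z = z2" using r1a[OF z1] y assms unfolding rv_def z_def z2_def by auto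
    have "z2 \<le> n - 2" "1 \<le> z2" using y assms unfolding z2_def by auto
    hence "gen n n z2 = z2" unfolding g by auto
    thus "W y = (if y < p then y else if y < q then y - 1 else y - 2)" using Wd a b z2_def by simp
  qed
  show "W p = 2*n"
  proof -
    have "wordprod n (run (n-1) q) p = p" using r2a[of p] assms by (simp add: rv_def)
    moreover have "wordprod n (run (n-2) p) p = n - 1" using r1a[of p] assms by (simp add: rv_def)
    moreover have "gen n n (n - 1) = 2 * n" unfolding g using assms(1) by auto
    ultimately show ?thesis using Wd by simp
  qed
  show "W q = 2*n - 1"
  proof -
    have "wordprod n (run (n-1) q) q = n" using r2a[of q] assms by (simp add: rv_def)
    moreover have "wordprod n (run (n-2) p) n = n" using r1a[of n] assms by (simp add: rv_def)
    moreover have "gen n n n = 2 * n - 1" unfolding g by simp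
    ultimately show ?thesis using Wd by simp
  qed
  show "\<And>a. q < a \<Longrightarrow> a \<le> n \<Longrightarrow> W (n + a) = n + a - 2"
  proof -
    fix a assume a: "q < a" "a \<le> n"
    have "wordprod n (run (n-1) q) (n+a) = n + (a - 1)" using r2b[of a] assms a by (simp add: rv_def)
    moreover have "wordprod n (run (n-2) p) (n + (a - 1)) = n + (a - 2)"
    proof -
      have f: "1 \<le> a - 1" "a - 1 \<le> n" "a - 1 \<noteq> p" "p < a - 1" "a - 1 \<le> Suc (n-2)"
        using assms(1-4) a by auto
      have "rv (n-2) p (a-1) = a - 2" using f unfolding rv_def by simp
      thus ?thesis using r1b[OF f(1,2)] by simp
    qed
    moreover have "gen n n (n + (a - 2)) = n + (a - 2)" unfolding g using assms a by auto
    ultimately show "W (n + a) = n + a - 2" using Wd a assms by simp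
  qed
qed


lemma wordprod_wl_Cons:
  "wordprod n (wl n (p # q # rest)) = wordprod n ([n] @ run (n-2) p @ run (n-1) q) \<circ> wordprod n (wl n rest)"
proof -
  have "wl n (p # q # rest) = ([n] @ run (n-2) p @ run (n-1) q) @ wl n rest" by simp
  thus ?thesis by (simp only: wordprod_append)
qed

lemma inv_wl:
  "2 \<le> n \<Longrightarrow> sorted_wrt (<) ys \<Longrightarrow> set ys \<subseteq> {1..n} \<Longrightarrow> even (length ys) \<Longrightarrow>
   (\<forall>j\<in>{1..n}. j \<notin> set ys \<longrightarrow> wordprod n (wl n ys) j = j - card {y\<in>set ys. y < j}) \<and>
   (\<forall>j\<in>set ys. n < wordprod n (wl n ys) j \<and> 2*n - length ys < wordprod n (wl n ys) j \<and> wordprod n (wl n ys) j \<le> 2*n)"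
proof (induction n ys rule: wl.induct)
  case (1 n p q rest)
  define W where "W = wordprod n (wl n rest)"
  define F where "F = wordprod n ([n] @ run (n-2) p @ run (n-1) q)"
  have n2: "2 \<le> n" using 1 by simp
  have pq: "p < q" "\<forall>y\<in>set rest. q < y" "\<forall>y\<in>set rest. p < y" using "1.prems"(2) by auto
  have rng: "1 \<le> p" "q \<le> n" "set rest \<subseteq> {1..n}" using "1.prems"(3) by auto
  have IH: "(\<forall>j\<in>{1..n}. j \<notin> set rest \<longrightarrow> W j = j - card {y\<in>set rest. y < j}) \<and>
     (\<forall>j\<in>set rest. n < W j \<and> 2*n - length rest < W j \<and> W j \<le> 2*n)"
    using "1.IH" "1.prems" unfolding W_def by simp
  note FV = F_vals[OF n2 rng(1) pq(1) rng(2), folded F_def]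
  have eq: "wordprod n (wl n (p # q # rest)) = F \<circ> W"
    unfolding F_def W_def by (rule wordprod_wl_Cons)
  have len: "length (p # q # rest) = length rest + 2" by simp
  have dist: "distinct rest" using "1.prems"(2) by (simp add: strict_sorted_iff)
  have lr: "length rest \<le> n - q"
  proof -
    have "set rest \<subseteq> {q<..n}" using pq(2) rng(3) by auto
    hence "card (set rest) \<le> card {q<..n}" by (intro card_mono) auto
    thus ?thesis using distinct_card[OF dist] by simp
  qed
  have A: "\<forall>j\<in>{1..n}. j \<notin> set (p # q # rest) \<longrightarrow> wordprod n (wl n (p # q # rest)) j = j - card {y\<in>set (p # q # rest). y < j}"
  proof (intro ballI impI)
    fix j assume j: "j \<in> {1..n}" "j \<notin> set (p # q # rest)"
    have jr: "j \<notin> set rest" "j \<noteq> p" "j \<noteq> q" using j(2) by auto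
    have Wj: "W j = j - card {y\<in>set rest. y < j}" using IH j(1) jr(1) by blast
    show "wordprod n (wl n (p # q # rest)) j = j - card {y\<in>set (p # q # rest). y < j}"
      unfolding eq comp_apply
    proof (cases "j < q")
      case True
      have e0: "{y\<in>set rest. y < j} = {}" using pq(2) True by auto
      have Wj': "W j = j" by (simp only: Wj e0 card.empty diff_zero)
      show "F (W j) = j - card {y\<in>set (p # q # rest). y < j}"
      proof (cases "j < p")
        case True
        have "{y\<in>set (p # q # rest). y < j} = {}" using e0 True pq(1) by auto
        hence c: "card {y\<in>set (p # q # rest). y < j} = 0" by (simp only: card.empty)
        show ?thesis unfolding c Wj' using FV(1)[OF j(1) jr(2,3)] True by simp
      next
        case False
        hence "p < j" using jr(2) by simp
        hence "{y\<in>set (p # q # rest). y < j} = {p}" using e0 \<open>j < q\<close> by auto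
        hence c: "card {y\<in>set (p # q # rest). y < j} = 1" by simp
        show ?thesis unfolding c Wj' using FV(1)[OF j(1) jr(2,3)] \<open>p < j\<close> \<open>j < q\<close> by simp
      qed
    next
      case False
      hence qj: "q < j" using jr(3) by simp
      define c where "c = card {y\<in>set rest. y < j}"
      have "{y\<in>set rest. y < j} \<subseteq> {q<..<j}" using pq(2) by auto
      hence "c \<le> card {q<..<j}" unfolding c_def by (intro card_mono) auto
      hence cle: "c \<le> j - q - 1" by simp
      have Wj2: "W j = j - c" using Wj c_def by simp
      have w1: "W j \<in> {1..n}" "W j \<noteq> p" "W j \<noteq> q" "\<not> W j < q" using Wj2 cle qj j(1) pq(1) by auto
      have Fw: "F (W j) = W j - 2" using FV(1)[OF w1(1-3)] w1(4) pq(1) by simp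
      have pr: "p \<notin> set rest" "q \<notin> set rest" using pq by auto
      have "{y\<in>set (p # q # rest). y < j} = insert p (insert q {y\<in>set rest. y < j})"
        using qj pq(1) by auto
      hence "card {y\<in>set (p # q # rest). y < j} = c + 2" using pr pq(1) unfolding c_def by simp
      thus "F (W j) = j - card {y\<in>set (p # q # rest). y < j}" using Fw Wj2 by simp
    qed
  qed
  have B: "\<forall>j\<in>set (p # q # rest). n < wordprod n (wl n (p # q # rest)) j \<and>
      2*n - length (p # q # rest) < wordprod n (wl n (p # q # rest)) j \<and> wordprod n (wl n (p # q # rest)) j \<le> 2*n"
    unfolding eq comp_apply len
  proof
    fix j assume j: "j \<in> set (p # q # rest)"
    consider "j = p" | "j = q" | "j \<in> set rest" using j by auto
    thus "n < F (W j) \<and> 2*n - (length rest + 2) < F (W j) \<and> F (W j) \<le> 2*n"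
    proof cases
      case 1
      have pr: "p \<notin> set rest" and e: "{y\<in>set rest. y < p} = {}" using pq by auto
      have pin: "p \<in> {1..n}" using rng pq(1) by auto
      have "W p = p - card {y\<in>set rest. y < p}" using IH pr pin by blast
      hence "W p = p" by (simp only: e card.empty diff_zero)
      thus ?thesis using 1 FV(2) n2 by simp
    next
      case 2
      have pr: "q \<notin> set rest" and e: "{y\<in>set rest. y < q} = {}" using pq by auto
      have pin: "q \<in> {1..n}" using rng pq(1) by auto
      have "W q = q - card {y\<in>set rest. y < q}" using IH pr pin by blast
      hence "W q = q" by (simp only: e card.empty diff_zero)
      thus ?thesis using 2 FV(3) n2 by auto
    next
      case 3
      have h: "n < W j" "2*n - length rest < W j" "W j \<le> 2*n" using IH 3 by auto
      define a where "a = W j - n"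
      have a: "q < a" "a \<le> n" "W j = n + a" using h lr rng(2) unfolding a_def by auto
      have "F (W j) = n + a - 2" using FV(4)[OF a(1,2)] a(3) by simp
      thus ?thesis using a h lr pq(1) rng by auto
    qed
  qed
  show ?case using A B by blast
next
  case ("2_1" n) thus ?case by simp
next
  case ("2_2" n v) thus ?case by simp
qed


lemma concat_wl:
  "concat (map (\<lambda>m. [n] @ run (n-2) (ys!(2*m-1-1)) @ run (n-1) (ys!(2*m-1))) [1..<Suc (length ys div 2)]) = wl n ys"
proof (induction n ys rule: wl.induct)
  case (1 n p q rest)
  let ?G = "\<lambda>ys m. [n] @ run (n-2) (ys!(2*m-1-1)) @ run (n-1) (ys!(2*m-1))"
  have l: "length (p # q # rest) div 2 = Suc (length rest div 2)" by simp
  have u: "[1..<Suc (Suc (length rest div 2))] = 1 # map Suc [1..<Suc (length rest div 2)]"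
    by (simp add: map_Suc_upt upt_conv_Cons)
  have m: "map (?G (p # q # rest) \<circ> Suc) [1..<Suc (length rest div 2)] = map (?G rest) [1..<Suc (length rest div 2)]"
  proof (rule map_cong[OF refl])
    fix m assume "m \<in> set [1..<Suc (length rest div 2)]"
    hence m1: "1 \<le> m" by auto
    have a0: "2 * Suc m - 1 - 1 = Suc (Suc (2*m-1-1))" using m1 by simp
    have b0: "2 * Suc m - 1 = Suc (Suc (2*m-1))" using m1 by simp
    have a: "(p # q # rest) ! (2 * Suc m - 1 - 1) = rest ! (2*m-1-1)" by (simp only: a0 nth_Cons_Suc)
    have b: "(p # q # rest) ! (2 * Suc m - 1) = rest ! (2*m-1)" by (simp only: b0 nth_Cons_Suc)
    show "(?G (p # q # rest) \<circ> Suc) m = ?G rest m" unfolding comp_apply a b by (rule refl)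
  qed
  have "concat (map (?G (p # q # rest)) [1..<Suc (length (p # q # rest) div 2)])
      = ?G (p # q # rest) 1 @ concat (map (?G (p # q # rest) \<circ> Suc) [1..<Suc (length rest div 2)])"
    unfolding l u by simp
  also have "\<dots> = ?G (p # q # rest) 1 @ concat (map (?G rest) [1..<Suc (length rest div 2)])"
    by (simp only: m)
  also have "\<dots> = ?G (p # q # rest) 1 @ wl n rest" by (simp only: "1.IH")
  also have "?G (p # q # rest) 1 = [n] @ run (n-2) p @ run (n-1) q" by simp
  finally show ?case by simp
next
  case ("2_1" n) thus ?case by simp
next
  case ("2_2" n v) thus ?case by simp
qed

lemma wordI_wl:
  assumes "finite I"
  shows "wordI n I = wl n (sorted_list_of_set I)"
proof -
  let ?xs = "sorted_list_of_set I"
  have c: "card I = length ?xs" by simp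
  have "factorI n I = (\<lambda>m. [n] @ run (n-2) (?xs!(2*m-1-1)) @ run (n-1) (?xs!(2*m-1)))"
    by (rule ext) (simp add: factorI_def ielem_def)
  hence "wordI n I = concat (map (\<lambda>m. [n] @ run (n-2) (?xs!(2*m-1-1)) @ run (n-1) (?xs!(2*m-1))) [1..<Suc (length ?xs div 2)])"
    unfolding wordI_def by (simp only: c)
  also have "\<dots> = wl n ?xs" by (rule concat_wl)
  finally show ?thesis .
qed

lemma length_wl:
  "2 \<le> n \<Longrightarrow> sorted_wrt (<) ys \<Longrightarrow> set ys \<subseteq> {1..n} \<Longrightarrow> even (length ys) \<Longrightarrow>
   length (wl n ys) = (\<Sum>j\<in>set ys. n - j)"
proof (induction n ys rule: wl.induct)
  case (1 n p q rest)
  have pq: "p < q" "p \<notin> set rest" "q \<notin> set rest" using "1.prems"(2) by auto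
  have rng: "1 \<le> p" "q \<le> n" using "1.prems"(3) by auto
  have ih: "length (wl n rest) = (\<Sum>j\<in>set rest. n - j)" using "1.IH" "1.prems" by simp
  have "length (wl n (p # q # rest)) = 1 + (n - 1 - p) + (n - q) + length (wl n rest)"
    using "1.prems"(1) by (simp add: length_run)
  also have "\<dots> = (n - p) + (n - q) + (\<Sum>j\<in>set rest. n - j)" using pq rng ih by simp
  also have "\<dots> = (\<Sum>j\<in>set (p # q # rest). n - j)" using pq by simp
  finally show ?case .
next
  case ("2_1" n) thus ?case by simp
next
  case ("2_2" n v) thus ?case by simp
qed

lemma set_wl:
  "2 \<le> n \<Longrightarrow> set ys \<subseteq> {1..n} \<Longrightarrow> set (wl n ys) \<subseteq> {1..n}"
proof (induction n ys rule: wl.induct)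
  case (1 n p q rest)
  thus ?case by (auto simp: set_run)
qed simp_all

lemma sorted_nth_ge:
  assumes "sorted_wrt (<) xs" "set xs \<subseteq> {1..}" "i < length xs"
  shows "i + 1 \<le> xs ! i"
  using assms(3)
proof (induction i)
  case 0
  hence "xs ! 0 \<in> set xs" by simp
  thus ?case using assms(2) by auto
next
  case (Suc i)
  have "xs ! i < xs ! Suc i" using sorted_wrt_nth_less[OF assms(1), of i "Suc i"] Suc.prems by simp
  thus ?case using Suc by simp
qed

lemma subseq_prefix: "subseq xs (xs @ zs)"
  by (rule prefix_imp_subseq, rule prefixI, rule refl)

lemma subseq_run:
  assumes "b' \<le> b"
  shows "subseq (run a b) (run a b')"
proof (cases "b \<le> Suc a")
  case True
  have "[b'..<Suc a] = [b'..<b] @ [b..<Suc a]"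
    using upt_add_eq_append[of b' b "Suc a - b"] True assms by simp
  hence "run a b' = run a b @ rev [b'..<b]" by (simp add: run_def)
  thus ?thesis using subseq_prefix by metis
next
  case False
  hence "run a b = []" by (simp add: run_def)
  thus ?thesis by simp
qed

lemma subseq_concat:
  "(\<And>m. m \<in> set L \<Longrightarrow> subseq (f m) (g m)) \<Longrightarrow> subseq (concat (map f L)) (concat (map g L))"
  by (induction L) (auto intro: list_emb_append_mono)

lemma SP_wordprod_comp:
  assumes "2 \<le> n" "SP n u" "set ys \<subseteq> {1..n}"
  shows "SP n (wordprod n ys \<circ> u)"
  using assms(3)
proof (induction ys)
  case Nil thus ?case using assms(2) by (simp add: id_def comp_def)
next
  case (Cons a ys)
  have "a \<in> {1..n}" using Cons.prems by auto
  moreover have "SP n (wordprod n ys \<circ> u)" by (rule Cons.IH) (use Cons.prems in auto)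
  ultimately have "a \<in> {1..n}" "SP n (wordprod n ys \<circ> u)" by blast+
  from SP_gen[OF assms(1) this] show ?case by (simp only: wordprod_Cons comp_assoc)
qed

lemma negset_wordprod_comp:
  assumes "2 \<le> n" "SP n u" "set ys \<subseteq> {1..n-1}"
  shows "negset n (wordprod n ys \<circ> u) = negset n u"
  using assms(3)
proof (induction ys)
  case Nil thus ?case by (simp add: id_def comp_def)
next
  case (Cons a ys)
  have a: "a \<in> {1..n}" "a \<noteq> n" using assms(1) Cons.prems by auto
  have ys: "set ys \<subseteq> {1..n}" using Cons.prems by fastforce
  have ih: "negset n (wordprod n ys \<circ> u) = negset n u" by (rule Cons.IH) (use Cons.prems in auto)
  have sp: "SP n (wordprod n ys \<circ> u)" by (rule SP_wordprod_comp[OF assms(1,2) ys])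
  have "negset n (gen n a \<circ> (wordprod n ys \<circ> u)) = negset n (wordprod n ys \<circ> u)"
    using negset_gen[OF assms(1) a(1) sp] a(2) by (simp add: negset_def)
  also have "\<dots> = negset n u" by (rule ih)
  finally show ?case by (simp only: wordprod_Cons comp_assoc)
qed


theorem lemma4:
  fixes n :: nat and I :: "nat set"
  assumes "n \<ge> 2" and "I \<subseteq> {1..n}" and "even (card I)"
  shows "let w = wordprod n (wordI n I) in
           inW n w \<and> negset n w = I
         \<and> (\<forall>u. inW n u \<and> negset n u = I \<and> u \<noteq> w \<longrightarrow> wlen n w < wlen n u)
         \<and> reduced_expr n (wordI n I) w
         \<and> (\<forall>v\<in>rcoset n w. v \<noteq> w \<longrightarrow> wlen n w < wlen n v)
         \<and> card I div 2 \<le> n div 2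
         \<and> (\<forall>m\<in>{1..card I div 2}. subseq (factorI n I m) (groupL n m))
         \<and> subseq (wordI n I) (wordLong n)"
proof -
  have n2: "2 \<le> n" using assms(1) by simp
  have fin: "finite I" using assms(2) finite_subset by blast
  define xs where "xs = sorted_list_of_set I"
  have xs: "sorted_wrt (<) xs" "set xs = I" "length xs = card I"
    unfolding xs_def using fin by (auto simp: strict_sorted_list_of_set)
  have xsr: "set xs \<subseteq> {1..n}" "even (length xs)" using xs assms(2,3) by auto
  define w where "w = wordprod n (wordI n I)"
  have wI: "wordI n I = wl n xs" unfolding xs_def by (rule wordI_wl[OF fin])
  have setw: "set (wordI n I) \<subseteq> {1..n}" unfolding wI by (rule set_wl[OF n2 xsr(1)])
  have isw: "is_word n (wordI n I)" using setw by (simp add: is_word_def)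
  have spw: "SP n w" unfolding w_def by (rule SP_wordprod[OF n2 setw])
  have INV: "(\<forall>j\<in>{1..n}. j \<notin> set xs \<longrightarrow> w j = j - card {y\<in>set xs. y < j}) \<and>
      (\<forall>j\<in>set xs. n < w j \<and> 2*n - length xs < w j \<and> w j \<le> 2*n)"
    unfolding w_def wI by (rule inv_wl[OF n2 xs(1) xsr])
  have negw: "negset n w = I"
  proof
    show "negset n w \<subseteq> I"
    proof
      fix i assume i: "i \<in> negset n w"
      hence i1: "i \<in> {1..n}" "n < w i" by (auto simp: negset_def)
      show "i \<in> I"
      proof (rule ccontr)
        assume "i \<notin> I"
        hence "w i = i - card {y\<in>set xs. y < i}" using INV i1(1) xs(2) by blast
        thus False using i1 by auto
      qed
    qed
    show "I \<subseteq> negset n w"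
    proof
      fix i assume i: "i \<in> I"
      hence "n < w i" using INV xs(2) by blast
      thus "i \<in> negset n w" using i assms(2) by (auto simp: negset_def)
    qed
  qed
  have inw: "inW n w" using spw negw assms(3) inW_SP by simp
  define L where "L = (\<Sum>j\<in>I. n - j)"
  have lenw: "length (wordI n I) = L"
    unfolding wI L_def using length_wl[OF n2 xs(1) xsr] xs(2) by simp
  have ffw1: "ff n w \<le> L" unfolding w_def using ff_word[OF n2 setw] lenw by simp
  have ffw2: "L \<le> ff n w" using ff_lower(1)[OF spw] negw L_def by simp
  have ffw: "ff n w = L" using ffw1 ffw2 by simp
  have Dw: "Dc n w" using ff_lower(2)[OF spw] ffw negw L_def by simp
  have wlw: "wlen n w = L"
  proof -
    have "wlen n w \<le> L" using wlen_le[OF isw] lenw w_def by simp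
    moreover have "ff n w \<le> wlen n w" using wlen_ge[OF n2 isw] w_def by simp
    ultimately show ?thesis using ffw by simp
  qed
  have K: "\<And>u ys. SP n u \<Longrightarrow> negset n u = I \<Longrightarrow> u \<noteq> w \<Longrightarrow> is_word n ys \<Longrightarrow> wordprod n ys = u \<Longrightarrow> wlen n w < wlen n u"
  proof -
    fix u ys assume u: "SP n u" "negset n u = I" "u \<noteq> w" "is_word n ys" "wordprod n ys = u"
    have l: "L \<le> ff n u" using ff_lower(1)[OF u(1)] u(2) L_def by simp
    have "ff n u \<noteq> L"
    proof
      assume "ff n u = L"
      hence "Dc n u" using ff_lower(2)[OF u(1)] u(2) L_def by simp
      hence "u = w" using Dc_unique[OF u(1) spw _ _ Dw] u(2) negw by simp
      thus False using u(3) by simp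
    qed
    hence "L < ff n u" using l by simp
    also have "ff n u \<le> wlen n u" by (rule wlen_ge[OF n2 u(4,5)])
    finally show "wlen n w < wlen n u" using wlw by simp
  qed
  have c3: "\<forall>u. inW n u \<and> negset n u = I \<and> u \<noteq> w \<longrightarrow> wlen n w < wlen n u"
  proof (intro allI impI)
    fix u assume u: "inW n u \<and> negset n u = I \<and> u \<noteq> w"
    obtain ys where ys: "is_word n ys" "wordprod n ys = u" using generation[OF n2] u by blast
    show "wlen n w < wlen n u" using K[OF _ _ _ ys] u inW_SP by blast
  qed
  have c4: "reduced_expr n (wordI n I) w"
    unfolding reduced_expr_def using isw w_def lenw wlw by simp
  have c5: "\<forall>v\<in>rcoset n w. v \<noteq> w \<longrightarrow> wlen n w < wlen n v"
  proof (intro ballI impI)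
    fix v assume v: "v \<in> rcoset n w" "v \<noteq> w"
    then obtain x where x: "x \<in> Wpar n" "v = x \<circ> w" unfolding rcoset_def by blast
    then obtain ys where ys: "set ys \<subseteq> {1..n-1}" "x = wordprod n ys" unfolding Wpar_def by blast
    have ysn: "set ys \<subseteq> {1..n}" using ys(1) by fastforce
    have vw: "v = wordprod n (ys @ wordI n I)" using x(2) ys(2) w_def by (simp add: wordprod_append)
    have isv: "is_word n (ys @ wordI n I)" using ysn setw by (simp add: is_word_def)
    have spv: "SP n v" using SP_wordprod_comp[OF n2 spw ysn] x(2) ys(2) by simp
    have nv: "negset n v = I" using negset_wordprod_comp[OF n2 spw ys(1)] x(2) ys(2) negw by simp
    show "wlen n w < wlen n v" using K[OF spv nv v(2) isv vw[symmetric]] .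
  qed
  have c6: "card I div 2 \<le> n div 2"
  proof -
    have "card I \<le> card {1..n}" by (rule card_mono[OF _ assms(2)]) simp
    thus ?thesis by (simp add: div_le_mono)
  qed
  have c7: "\<forall>m\<in>{1..card I div 2}. subseq (factorI n I m) (groupL n m)"
  proof
    fix m assume m: "m \<in> {1..card I div 2}"
    have lt: "2*m - 1 - 1 < length xs" "2*m - 1 < length xs" using m xs(3) by auto
    have pos: "set xs \<subseteq> {1..}" using xsr(1) by auto
    have g1: "2*m - 1 \<le> ielem I (2*m-1)"
      using sorted_nth_ge[OF xs(1) pos lt(1)] m unfolding ielem_def xs_def[symmetric] by auto
    have g2: "2*m \<le> ielem I (2*m)"
      using sorted_nth_ge[OF xs(1) pos lt(2)] m unfolding ielem_def xs_def[symmetric] by auto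
    have s1: "subseq (run (n-2) (ielem I (2*m-1))) (run (n-2) (2*m-1))" by (rule subseq_run[OF g1])
    have s2: "subseq (run (n-1) (ielem I (2*m))) (run (n-1) (2*m))" by (rule subseq_run[OF g2])
    have s0: "subseq [n] [n]" by simp
    show "subseq (factorI n I m) (groupL n m)"
      unfolding factorI_def groupL_def
      using list_emb_append_mono[OF s0 list_emb_append_mono[OF s1 s2]] .
  qed
  have c8: "subseq (wordI n I) (wordLong n)"
  proof -
    let ?r = "card I div 2"
    have u: "[1..<Suc (n div 2)] = [1..<Suc ?r] @ [Suc ?r..<Suc (n div 2)]"
      using upt_add_eq_append[of 1 "Suc ?r" "n div 2 - ?r"] c6 by simp
    have a: "subseq (concat (map (factorI n I) [1..<Suc ?r])) (concat (map (groupL n) [1..<Suc ?r]))"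
      by (rule subseq_concat) (use c7 in auto)
    have "subseq (concat (map (factorI n I) [1..<Suc ?r]) @ [])
        (concat (map (groupL n) [1..<Suc ?r]) @ concat (map (groupL n) [Suc ?r..<Suc (n div 2)]))"
      by (rule list_emb_append_mono[OF a]) simp
    thus ?thesis unfolding wordI_def wordLong_def u by simp
  qed
  show ?thesis unfolding Let_def w_def[symmetric]
    using inw negw c3 c4 c5 c6 c7 c8 by blast
qed

end
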